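(* Let $\mathcal G=(G_n)$ be an expander sequence and let $I_t=I_t^{(pp)}$ for push\&pull on $G_n$ with transmission success probability $q\in(0,1)$, and suppose $|I_t|\le n/2$. Then for $\tau=\log n/(q-\log(1-q))$ and all $c<1$, whp $|I_{t+c\tau}|<n$.
   Context: push\&pull protocol: in each synchronous round every vertex chooses a neighbour independently and uniformly at random; an informed vertex informs its chosen neighbour (push) and an uninformed vertex that chose an informed neighbour becomes informed (pull), each such transmission succeeding independently with probability $q$. $I_t$ is the set of vertices informed at the beginning of round $t$; probabilities are conditional on $I_t$. An expander sequence is a sequence $(G_n)$ of connected graphs, $G_n$ on $n$ vertices with minimum degree $\delta_n$, maximum degree $\Delta_n$, and $\lambda_n=\max\{|\mu_2|,|\mu_n|\}$ (adjacency eigenvalues), with $\Delta_n/\delta_n=1+o(1)$ and $\lambda_n=o(\Delta_n)$. whp means with probability $1-o(1)$ as $n\to\infty$; natural log. *)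

theory Defs
  imports "HOL-Probability.Probability" "HOL-Library.Landau_Symbols"
    "Jordan_Normal_Form.Char_Poly"
begin

definition simple_graph :: "nat \<Rightarrow> (nat \<Rightarrow> nat \<Rightarrow> bool) \<Rightarrow> bool" where
  "simple_graph n E \<longleftrightarrow> (\<forall>u v. E u v \<longrightarrow> u < n \<and> v < n) \<and>
     (\<forall>u v. E u v \<longrightarrow> E v u) \<and> (\<forall>u. \<not> E u u)"

definition nbrs :: "nat \<Rightarrow> (nat \<Rightarrow> nat \<Rightarrow> bool) \<Rightarrow> nat \<Rightarrow> nat set" where
  "nbrs n E v = {u. u < n \<and> E v u}"

definition deg :: "nat \<Rightarrow> (nat \<Rightarrow> nat \<Rightarrow> bool) \<Rightarrow> nat \<Rightarrow> nat" where
  "deg n E v = card (nbrs n E v)"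

definition min_deg :: "nat \<Rightarrow> (nat \<Rightarrow> nat \<Rightarrow> bool) \<Rightarrow> nat" where
  "min_deg n E = Min (deg n E ` {..<n})"

definition max_deg :: "nat \<Rightarrow> (nat \<Rightarrow> nat \<Rightarrow> bool) \<Rightarrow> nat" where
  "max_deg n E = Max (deg n E ` {..<n})"

definition connected_graph :: "nat \<Rightarrow> (nat \<Rightarrow> nat \<Rightarrow> bool) \<Rightarrow> bool" where
  "connected_graph n E \<longleftrightarrow> (\<forall>u<n. \<forall>v<n. (u, v) \<in> {(x, y). E x y}\<^sup>*)"

definition adj_matrix :: "nat \<Rightarrow> (nat \<Rightarrow> nat \<Rightarrow> bool) \<Rightarrow> real mat" where
  "adj_matrix n E = mat n n (\<lambda>(i, j). if E i j then 1 else 0)"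

text \<open>The adjacency eigenvalues mu_1 >= mu_2 >= ... >= mu_n, listed with multiplicity
  (the adjacency matrix is real symmetric, so its characteristic polynomial splits over the reals).\<close>

definition adj_eigenvalues :: "nat \<Rightarrow> (nat \<Rightarrow> nat \<Rightarrow> bool) \<Rightarrow> real list" where
  "adj_eigenvalues n E = (THE xs. length xs = n \<and> sorted_wrt (\<ge>) xs \<and>
      char_poly (adj_matrix n E) = (\<Prod>\<mu>\<leftarrow>xs. [:- \<mu>, 1:]))"

text \<open>lambda_n = max(|mu_2|, |mu_n|)  (list indices 1 and n-1).\<close>

definition spectral_lambda :: "nat \<Rightarrow> (nat \<Rightarrow> nat \<Rightarrow> bool) \<Rightarrow> real" where
  "spectral_lambda n E = max \<bar>adj_eigenvalues n E ! 1\<bar> \<bar>adj_eigenvalues n E ! (n - 1)\<bar>"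

definition expander_sequence :: "(nat \<Rightarrow> nat \<Rightarrow> nat \<Rightarrow> bool) \<Rightarrow> bool" where
  "expander_sequence G \<longleftrightarrow>
     (\<forall>n. simple_graph n (G n) \<and> connected_graph n (G n)) \<and>
     ((\<lambda>n. real (max_deg n (G n)) / real (min_deg n (G n))) \<longlonglongrightarrow> 1) \<and>
     (\<lambda>n. spectral_lambda n (G n)) \<in> o(\<lambda>n. real (max_deg n (G n)))"

text \<open>In one round, every vertex v picks a uniformly random neighbour w v (an isolated vertex,
  which only occurs for n = 1, picks itself, which has no effect) and a coin b v that is True
  with probability q. The transmission along the edge chosen by v succeeds iff b v:
  push if v is informed, pull if w v is informed.\<close>

definition vertex_choice :: "nat \<Rightarrow> (nat \<Rightarrow> nat \<Rightarrow> bool) \<Rightarrow> real \<Rightarrow> nat \<Rightarrow> (nat \<times> bool) pmf" where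
  "vertex_choice n E q v =
     pair_pmf (if nbrs n E v = {} then return_pmf v else pmf_of_set (nbrs n E v)) (bernoulli_pmf q)"

definition pp_update :: "nat \<Rightarrow> nat set \<Rightarrow> (nat \<Rightarrow> nat \<times> bool) \<Rightarrow> nat set" where
  "pp_update n I ch = I \<union> {fst (ch v) |v. v \<in> I \<and> v < n \<and> snd (ch v)}
                        \<union> {v. v < n \<and> fst (ch v) \<in> I \<and> snd (ch v)}"

definition pp_round :: "nat \<Rightarrow> (nat \<Rightarrow> nat \<Rightarrow> bool) \<Rightarrow> real \<Rightarrow> nat set \<Rightarrow> nat set pmf" where
  "pp_round n E q I = map_pmf (pp_update n I) (Pi_pmf {..<n} (0, False) (vertex_choice n E q))"

definition pp_rounds :: "nat \<Rightarrow> (nat \<Rightarrow> nat \<Rightarrow> bool) \<Rightarrow> real \<Rightarrow> nat \<Rightarrow> nat set \<Rightarrow> nat set pmf" where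
  "pp_rounds n E q k I = ((\<lambda>p. bind_pmf p (pp_round n E q)) ^^ k) (return_pmf I)"

end

theory Submission
  imports Defs "Jordan_Normal_Form.Schur_Decomposition"
begin

lemma adj_carrier: "adj_matrix n E \<in> carrier_mat n n"
  unfolding adj_matrix_def by auto

lemma adj_index: "i < n \<Longrightarrow> j < n \<Longrightarrow> adj_matrix n E $$ (i,j) = (if E i j then 1 else 0)"
  unfolding adj_matrix_def by auto

lemma real_sym_eigenvalue_real:
  fixes A :: "real mat" and a :: complex
  assumes A: "A \<in> carrier_mat n n"
    and sym: "\<And>i j. i < n \<Longrightarrow> j < n \<Longrightarrow> A $$ (i,j) = A $$ (j,i)"
    and ev: "eigenvalue (of_real_hom.mat_hom A) a"
  shows "Im a = 0"
proof -
  let ?B = "of_real_hom.mat_hom A :: complex mat"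
  have B: "?B \<in> carrier_mat n n" using A by auto
  from ev obtain v where v: "v \<in> carrier_vec n" "v \<noteq> 0\<^sub>v n" "?B *\<^sub>v v = a \<cdot>\<^sub>v v"
    unfolding eigenvalue_def eigenvector_def using B by auto
  have Bv: "(\<Sum>j<n. complex_of_real (A $$ (i,j)) * v $ j) = a * v $ i" if i: "i < n" for i
  proof -
    have "(?B *\<^sub>v v) $ i = a * v $ i" using v(3) v(1) i by (metis index_smult_vec(1) carrier_vecD)
    moreover have "(?B *\<^sub>v v) $ i = (\<Sum>j<n. complex_of_real (A $$ (i,j)) * v $ j)"
      using A i v(1) by (auto simp: mult_mat_vec_def scalar_prod_def atLeast0LessThan intro!: sum.cong)
    ultimately show ?thesis by simp
  qed
  define s where "s = (\<Sum>i<n. cnj (v $ i) * (\<Sum>j<n. complex_of_real (A $$ (i,j)) * v $ j))"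
  define N where "N = (\<Sum>i<n. (cmod (v $ i))^2)"
  have s1: "s = a * complex_of_real N"
  proof -
    have "s = (\<Sum>i<n. a * (v $ i * cnj (v $ i)))"
      unfolding s_def using Bv by (simp add: mult.commute mult.left_commute)
    also have "\<dots> = a * complex_of_real N" unfolding N_def
      by (simp add: sum_distrib_left) (metis (no_types) complex_norm_square of_real_power)
    finally show ?thesis .
  qed
  have "cnj s = (\<Sum>i<n. v $ i * (\<Sum>j<n. complex_of_real (A $$ (i,j)) * cnj (v $ j)))"
    unfolding s_def by (simp add: sum_distrib_left)
  also have "\<dots> = (\<Sum>i<n. \<Sum>j<n. cnj (v $ j) * complex_of_real (A $$ (j,i)) * v $ i)"
    by (auto simp: sum_distrib_left sym intro!: sum.cong)
  also have "\<dots> = s"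
    unfolding s_def by (subst sum.swap) (simp add: sum_distrib_left mult.assoc)
  finally have "cnj s = s" .
  hence "Im s = 0" by (metis Reals_cnj_iff complex_is_Real_iff)
  have "N > 0"
  proof -
    obtain i where i: "i < n" "v $ i \<noteq> 0"
      using v(1,2) by (metis carrier_vecD eq_vecI index_zero_vec(1,2))
    have "(cmod (v $ i))^2 \<le> N" unfolding N_def
      by (rule member_le_sum) (use i in auto)
    moreover have "(cmod (v $ i))^2 > 0" using i by simp
    ultimately show ?thesis by linarith
  qed
  have "Im s = Im a * N" using s1 by simp
  with \<open>Im s = 0\<close> \<open>N > 0\<close> show ?thesis by simp
qed

lemma real_sym_char_poly_split:
  fixes A :: "real mat"
  assumes A: "A \<in> carrier_mat n n"
    and sym: "\<And>i j. i < n \<Longrightarrow> j < n \<Longrightarrow> A $$ (i,j) = A $$ (j,i)"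
  shows "\<exists>rs. length rs = n \<and> char_poly A = (\<Prod>r\<leftarrow>rs. [:- r, 1:])"
proof -
  interpret rp: map_poly_inj_idom_hom "of_real :: real \<Rightarrow> complex" ..
  let ?B = "of_real_hom.mat_hom A :: complex mat"
  have B: "?B \<in> carrier_mat n n" using A by auto
  obtain as where as: "char_poly ?B = (\<Prod>a\<leftarrow>as. [:- a, 1:])" "length as = n"
    using char_poly_factorized[OF B] by auto
  have re: "complex_of_real (Re a) = a" if a: "a \<in> set as" for a
  proof -
    have "poly (char_poly ?B) a = 0" unfolding as(1) by (rule linear_poly_root[OF a])
    hence "eigenvalue ?B a" using eigenvalue_root_char_poly[OF B] by simp
    hence "Im a = 0" using real_sym_eigenvalue_real[OF A] sym by blast
    thus ?thesis by (simp add: complex_eq_iff)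
  qed
  define rs where "rs = map Re as"
  have as_rs: "as = map complex_of_real rs" unfolding rs_def using re
    by (induct as) auto
  have "char_poly ?B = map_poly of_real (char_poly A)"
    by (rule of_real_hom.char_poly_hom[OF A])
  hence "map_poly of_real (char_poly A) = char_poly ?B" by simp
  also have "\<dots> = (\<Prod>r\<leftarrow>rs. [:- complex_of_real r, 1:])" unfolding as(1) as_rs
    by (simp add: o_def)
  also have "\<dots> = map_poly of_real (\<Prod>r\<leftarrow>rs. [:- r, 1:])"
    by (simp add: rp.hom_prod_list o_def)
  finally have "char_poly A = (\<Prod>r\<leftarrow>rs. [:- r, 1:])" by (rule rp.injectivity)
  moreover have "length rs = n" using as(2) unfolding rs_def by simp
  ultimately show ?thesis by blast
qed

lemma order_linear_prod:
  fixes xs :: "real list"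
  shows "Polynomial.order x (\<Prod>r\<leftarrow>xs. [:- r, 1:]) = count (mset xs) x"
proof -
  have "Polynomial.order x (\<Prod>r\<leftarrow>xs. [:- r, 1:]) = sum_list (map (Polynomial.order x) (map (\<lambda>r. [:- r, 1:]) xs))"
    by (rule order_prod_list) auto
  also have "\<dots> = count (mset xs) x"
    by (induct xs) (auto simp: order_linear')
  finally show ?thesis .
qed

lemma sorted_desc_unique:
  fixes xs ys :: "real list"
  assumes "sorted_wrt (\<ge>) xs" "sorted_wrt (\<ge>) ys" "mset xs = mset ys"
  shows "xs = ys"
proof -
  have "sorted (rev xs)" "sorted (rev ys)" using assms(1,2) by (simp_all add: sorted_wrt_rev)
  hence "sort (rev ys) = rev xs" "sort (rev ys) = rev ys"
    using assms(3) by (auto intro!: properties_for_sort)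
  thus ?thesis by simp
qed

lemma adj_eigenvalues_spec:
  assumes "simple_graph n E"
  shows "length (adj_eigenvalues n E) = n \<and> sorted_wrt (\<ge>) (adj_eigenvalues n E) \<and>
      char_poly (adj_matrix n E) = (\<Prod>\<mu>\<leftarrow>adj_eigenvalues n E. [:- \<mu>, 1:])"
proof -
  let ?P = "\<lambda>xs. length xs = n \<and> sorted_wrt (\<ge>) xs \<and>
      char_poly (adj_matrix n E) = (\<Prod>\<mu>\<leftarrow>xs. [:- \<mu>, 1:])"
  have sym: "adj_matrix n E $$ (i,j) = adj_matrix n E $$ (j,i)" if "i < n" "j < n" for i j
    using assms that unfolding simple_graph_def by (auto simp: adj_index)
  obtain rs where rs: "length rs = n" "char_poly (adj_matrix n E) = (\<Prod>r\<leftarrow>rs. [:- r, 1:])"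
    using real_sym_char_poly_split[OF adj_carrier sym] by blast
  define xs where "xs = rev (sort rs)"
  have "mset xs = mset rs" unfolding xs_def by simp
  hence "(\<Prod>r\<leftarrow>xs. [:- r, 1:]) = (\<Prod>r\<leftarrow>rs. [:- r, 1:])"
    by (metis mset_map prod_mset_prod_list)
  moreover have "sorted_wrt (\<ge>) xs" unfolding xs_def by (simp add: sorted_wrt_rev)
  moreover have "length xs = n" unfolding xs_def using rs by simp
  ultimately have ex: "?P xs" using rs by simp
  have uniq: "ys = xs" if "?P ys" for ys
  proof (rule sorted_desc_unique)
    show "sorted_wrt (\<ge>) ys" "sorted_wrt (\<ge>) xs" using that ex by auto
    show "mset ys = mset xs"
    proof (rule multiset_eqI)
      fix x
      have "count (mset ys) x = Polynomial.order x (char_poly (adj_matrix n E))"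
        using that by (simp add: order_linear_prod)
      also have "\<dots> = count (mset xs) x" using ex by (simp add: order_linear_prod)
      finally show "count (mset ys) x = count (mset xs) x" .
    qed
  qed
  have "?P (THE xs. ?P xs)" by (rule theI[of ?P xs]) (use ex uniq in auto)
  thus ?thesis unfolding adj_eigenvalues_def .
qed


definition mtr :: "real mat \<Rightarrow> real" where "mtr M = (\<Sum>i<dim_row M. M $$ (i,i))"

lemma mult_diag: "X \<in> carrier_mat n n \<Longrightarrow> Y \<in> carrier_mat n n \<Longrightarrow> i < n \<Longrightarrow>
   (X * Y) $$ (i,i) = (\<Sum>j<n. X $$ (i,j) * Y $$ (j,i))"
proof -
  assume a: "X \<in> carrier_mat n n" "Y \<in> carrier_mat n n" "i < n"
  have "(X * Y) $$ (i,i) = Matrix.row X i \<bullet> col Y i" using a by (simp add: index_mult_mat)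
  also have "\<dots> = (\<Sum>j<n. X $$ (i,j) * Y $$ (j,i))"
    unfolding scalar_prod_def using a by (simp add: atLeast0LessThan)
  finally show ?thesis .
qed

lemma mtr_mult:
  assumes X: "X \<in> carrier_mat n n" and Y: "Y \<in> carrier_mat n n"
  shows "mtr (X * Y) = (\<Sum>i<n. \<Sum>j<n. X $$ (i,j) * Y $$ (j,i))"
proof -
  have "dim_row (X * Y) = n" using X by simp
  hence "mtr (X * Y) = (\<Sum>i<n. (X * Y) $$ (i,i))" unfolding mtr_def by simp
  also have "\<dots> = (\<Sum>i<n. \<Sum>j<n. X $$ (i,j) * Y $$ (j,i))"
    by (rule sum.cong[OF refl]) (rule mult_diag[OF X Y], simp)
  finally show ?thesis .
qed

lemma mtr_comm:
  assumes X: "X \<in> carrier_mat n n" and Y: "Y \<in> carrier_mat n n"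
  shows "mtr (X * Y) = mtr (Y * X)"
proof -
  have "mtr (X * Y) = (\<Sum>i<n. \<Sum>j<n. X $$ (i,j) * Y $$ (j,i))"
    by (rule mtr_mult[OF X Y])
  also have "\<dots> = (\<Sum>j<n. \<Sum>i<n. Y $$ (j,i) * X $$ (i,j))"
    by (subst sum.swap) (simp add: mult.commute)
  also have "\<dots> = mtr (Y * X)"
    by (rule mtr_mult[OF Y X, symmetric])
  finally show ?thesis .
qed

lemma mtr_sq_eigen:
  fixes A :: "real mat"
  assumes A: "A \<in> carrier_mat n n"
    and cp: "char_poly A = (\<Prod>r\<leftarrow>xs. [:- r, 1:])" and len: "length xs = n"
  shows "mtr (A * A) = (\<Sum>i<n. (xs ! i)^2)"
proof -
  obtain B P Q where sch: "schur_decomposition A xs = (B,P,Q)" by (cases "schur_decomposition A xs") auto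
  from schur_decomposition[OF A cp sch]
  have sim: "similar_mat_wit A B P Q" and ut: "upper_triangular B" and dg: "diag_mat B = xs" by auto
  from sim A have PBQ: "P \<in> carrier_mat n n" "B \<in> carrier_mat n n" "Q \<in> carrier_mat n n"
     "Q * P = 1\<^sub>m n" "A = P * B * Q"
    unfolding similar_mat_wit_def Let_def by auto
  note c = PBQ(1-3)
  have e2: "Q * (P * B * Q) = B * Q"
  proof -
    have "Q * (P * B * Q) = Q * (P * (B * Q))" using c by (simp add: assoc_mult_mat[of P n n B n Q n])
    also have "\<dots> = (Q * P) * (B * Q)" using c by (simp add: assoc_mult_mat[of Q n n P n "B * Q" n])
    also have "\<dots> = B * Q" using c PBQ(4) by simp
    finally show ?thesis .
  qed
  have "A * A = P * ((B * B) * Q)"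
  proof -
    have "A * A = (P * B) * Q * (P * B * Q)" using PBQ by simp
    also have "\<dots> = (P * B) * (Q * (P * B * Q))"
      by (rule assoc_mult_mat[of _ n n _ n _ n]) (use c in auto)
    also have "\<dots> = (P * B) * (B * Q)" using e2 by simp
    also have "\<dots> = P * (B * (B * Q))"
      by (rule assoc_mult_mat[of _ n n _ n _ n]) (use c in auto)
    also have "B * (B * Q) = (B * B) * Q"
      by (rule assoc_mult_mat[of _ n n _ n _ n, symmetric]) (use c in auto)
    finally show ?thesis .
  qed
  hence m1: "mtr (A * A) = mtr ((B * B * Q) * P)"
    using mtr_comm[of P n "B * B * Q"] c by simp
  have "(B * B * Q) * P = (B * B) * (Q * P)"
    by (rule assoc_mult_mat[of _ n n _ n _ n]) (use c in auto)
  also have "\<dots> = B * B" using PBQ(4) c by simp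
  finally have "mtr (A * A) = mtr (B * B)" using m1 by simp
  also have "\<dots> = (\<Sum>i<n. \<Sum>j<n. B $$ (i,j) * B $$ (j,i))"
    by (rule mtr_mult[OF PBQ(2) PBQ(2)])
  also have "\<dots> = (\<Sum>i<n. B $$ (i,i) * B $$ (i,i))"
  proof (rule sum.cong[OF refl])
    fix i assume i: "i \<in> {..<n}"
    have "(\<Sum>j<n. B $$ (i,j) * B $$ (j,i)) = (\<Sum>j\<in>{i}. B $$ (i,j) * B $$ (j,i))"
    proof (rule sum.mono_neutral_right)
      show "\<forall>j\<in>{..<n} - {i}. B $$ (i, j) * B $$ (j, i) = 0"
      proof
        fix j assume j: "j \<in> {..<n} - {i}"
        show "B $$ (i, j) * B $$ (j, i) = 0"
        proof (cases "j < i")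
          case True thus ?thesis using ut PBQ i by (auto simp: upper_triangular_def)
        next
          case False hence "i < j" using j by auto
          thus ?thesis using ut PBQ j by (auto simp: upper_triangular_def)
        qed
      qed
    qed (use i in auto)
    thus "(\<Sum>j<n. B $$ (i,j) * B $$ (j,i)) = B $$ (i,i) * B $$ (i,i)" by simp
  qed
  also have "\<dots> = (\<Sum>i<n. (xs ! i)^2)"
  proof (rule sum.cong[OF refl])
    fix i assume i: "i \<in> {..<n}"
    have "xs ! i = B $$ (i,i)" using dg[symmetric] PBQ i by (auto simp: diag_mat_def)
    thus "B $$ (i,i) * B $$ (i,i) = (xs ! i)^2" by (simp add: power2_eq_square)
  qed
  finally show ?thesis .
qed

lemma deg_sum: "u < n \<Longrightarrow> real (deg n E u) = (\<Sum>j<n. if E u j then 1 else 0)"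
  unfolding deg_def nbrs_def
  by (simp add: sum.If_cases Int_def conj_commute)

lemma mtr_adj: assumes sg: "simple_graph n E" shows "mtr (adj_matrix n E * adj_matrix n E) = (\<Sum>u<n. real (deg n E u))"
proof -
  have "mtr (adj_matrix n E * adj_matrix n E) =
     (\<Sum>u<n. \<Sum>j<n. adj_matrix n E $$ (u,j) * adj_matrix n E $$ (j,u))"
    by (rule mtr_mult[OF adj_carrier adj_carrier])
  also have "\<dots> = (\<Sum>u<n. real (deg n E u))"
  proof (rule sum.cong[OF refl])
    fix u assume u: "u \<in> {..<n}"
    have "(\<Sum>j<n. adj_matrix n E $$ (u, j) * adj_matrix n E $$ (j, u)) = (\<Sum>j<n. if E u j then 1 else 0)"
      using sg u by (intro sum.cong refl) (auto simp: adj_index simple_graph_def)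
    thus "(\<Sum>j<n. adj_matrix n E $$ (u, j) * adj_matrix n E $$ (j, u)) = real (deg n E u)"
      using deg_sum u by simp
  qed
  finally show ?thesis .
qed

lemma deg_le_max: "u < n \<Longrightarrow> deg n E u \<le> max_deg n E"
  unfolding max_deg_def by (rule Max_ge) auto

lemma min_le_deg: "u < n \<Longrightarrow> min_deg n E \<le> deg n E u"
  unfolding min_deg_def by (rule Min_le) auto

lemma eig_bound:
  assumes sg: "simple_graph n E" and root: "poly (char_poly (adj_matrix n E)) \<mu> = 0"
  shows "\<bar>\<mu>\<bar> \<le> real (max_deg n E)"
proof -
  let ?A = "adj_matrix n E"
  have "eigenvalue ?A \<mu>" using eigenvalue_root_char_poly[OF adj_carrier] root by simp
  then obtain v where v: "v \<in> carrier_vec n" "v \<noteq> 0\<^sub>v n" "?A *\<^sub>v v = \<mu> \<cdot>\<^sub>v v"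
    unfolding eigenvalue_def eigenvector_def using adj_carrier[of n E] by auto
  obtain i0 where i0: "i0 < n" "v $ i0 \<noteq> 0"
    using v(1,2) by (metis carrier_vecD eq_vecI index_zero_vec(1,2))
  have "n > 0" using i0 by simp
  obtain i where i: "i \<in> {..<n}" "\<forall>j\<in>{..<n}. \<bar>v $ j\<bar> \<le> \<bar>v $ i\<bar>"
  proof -
    let ?S = "(\<lambda>j. \<bar>v $ j\<bar>) ` {..<n}"
    have fin: "finite ?S" "?S \<noteq> {}" using \<open>n > 0\<close> by auto
    obtain i where "i \<in> {..<n}" "\<bar>v $ i\<bar> = Max ?S" using Max_in[OF fin] by auto
    moreover have "\<forall>j\<in>{..<n}. \<bar>v $ j\<bar> \<le> Max ?S" using fin by auto
    ultimately show ?thesis using that by auto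
  qed
  have pos: "\<bar>v $ i\<bar> > 0" using i i0 by force
  have eq: "\<mu> * v $ i = (\<Sum>j<n. (if E i j then 1 else 0) * v $ j)"
  proof -
    have "(?A *\<^sub>v v) $ i = \<mu> * v $ i" using v(3) v(1) i by (metis index_smult_vec(1) carrier_vecD lessThan_iff)
    moreover have "(?A *\<^sub>v v) $ i = (\<Sum>j<n. (if E i j then 1 else 0) * v $ j)"
      using i v(1) by (auto simp: mult_mat_vec_def scalar_prod_def atLeast0LessThan adj_index
          adj_matrix_def intro!: sum.cong)
    ultimately show ?thesis by simp
  qed
  have "\<bar>\<mu>\<bar> * \<bar>v $ i\<bar> = \<bar>\<Sum>j<n. (if E i j then 1 else 0) * v $ j\<bar>"
    using eq by (metis abs_mult)
  also have "\<dots> \<le> (\<Sum>j<n. (if E i j then 1 else 0) * \<bar>v $ i\<bar>)"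
    by (rule order.trans[OF sum_abs]) (rule sum_mono, use i in auto)
  also have "\<dots> = real (deg n E i) * \<bar>v $ i\<bar>"
    using deg_sum[of i n E] i by (simp add: sum_distrib_right)
  also have "\<dots> \<le> real (max_deg n E) * \<bar>v $ i\<bar>"
    using deg_le_max[of i n E] i pos by (intro mult_right_mono) auto
  finally show ?thesis using pos by simp
qed

lemma spectral_ineq:
  assumes sg: "simple_graph n E" and n: "n \<ge> 2"
  shows "real n * real (min_deg n E) \<le> real (max_deg n E)^2 + real (n - 1) * (spectral_lambda n E)^2"
proof -
  define xs where "xs = adj_eigenvalues n E"
  have spec: "length xs = n" "sorted_wrt (\<ge>) xs"
     "char_poly (adj_matrix n E) = (\<Prod>\<mu>\<leftarrow>xs. [:- \<mu>, 1:])"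
    using adj_eigenvalues_spec[OF sg] unfolding xs_def by auto
  have "real n * real (min_deg n E) = (\<Sum>u<n. real (min_deg n E))" by simp
  also have "\<dots> \<le> (\<Sum>u<n. real (deg n E u))" by (intro sum_mono) (simp add: min_le_deg)
  also have "\<dots> = mtr (adj_matrix n E * adj_matrix n E)" by (rule mtr_adj[OF sg, symmetric])
  also have "\<dots> = (\<Sum>i<n. (xs ! i)^2)" by (rule mtr_sq_eigen[OF adj_carrier spec(3) spec(1)])
  also have "\<dots> = (xs ! 0)^2 + (\<Sum>i\<in>{1..<n}. (xs ! i)^2)"
  proof -
    have "{..<n} = insert 0 {1..<n}" using n by auto
    thus ?thesis by simp
  qed
  also have "\<dots> \<le> real (max_deg n E)^2 + (\<Sum>i\<in>{1..<n}. (spectral_lambda n E)^2)"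
  proof (rule add_mono)
    have "poly (char_poly (adj_matrix n E)) (xs ! 0) = 0"
      unfolding spec(3) by (rule linear_poly_root) (use spec(1) n in auto)
    hence "\<bar>xs ! 0\<bar> \<le> real (max_deg n E)" by (rule eig_bound[OF sg])
    thus "(xs ! 0)^2 \<le> real (max_deg n E)^2" by (metis abs_ge_zero power2_abs power_mono)
    show "(\<Sum>i\<in>{1..<n}. (xs ! i)^2) \<le> (\<Sum>i\<in>{1..<n}. (spectral_lambda n E)^2)"
    proof (rule sum_mono)
      fix i assume i: "i \<in> {1..<n}"
      have "xs ! i \<le> xs ! 1"
      proof (cases "i = 1")
        case False thus ?thesis using spec(1,2) i by (auto intro: sorted_wrt_nth_less)
      qed simp
      moreover have "xs ! (n - 1) \<le> xs ! i"
      proof (cases "i = n - 1")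
        case False thus ?thesis using spec(1,2) i by (auto intro: sorted_wrt_nth_less)
      qed simp
      ultimately have "\<bar>xs ! i\<bar> \<le> spectral_lambda n E"
        unfolding spectral_lambda_def xs_def[symmetric] by auto
      thus "(xs ! i)^2 \<le> (spectral_lambda n E)^2" by (metis abs_ge_zero power2_abs power_mono)
    qed
  qed
  also have "\<dots> = real (max_deg n E)^2 + real (n - 1) * (spectral_lambda n E)^2" by simp
  finally show ?thesis .
qed

lemma expander_min_deg:
  assumes ex: "expander_sequence G"
  shows "filterlim (\<lambda>n. real (min_deg n (G n))) at_top sequentially"
  unfolding filterlim_at_top
proof
  fix M0 :: real
  define M where "M = max M0 1"
  have M: "M \<ge> 1" "M0 \<le> M" unfolding M_def by auto
  have sg: "\<And>n. simple_graph n (G n)" using ex unfolding expander_sequence_def by auto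
  have rat: "(\<lambda>n. real (max_deg n (G n)) / real (min_deg n (G n))) \<longlonglongrightarrow> 1"
    using ex unfolding expander_sequence_def by auto
  have lo: "(\<lambda>n. spectral_lambda n (G n)) \<in> o(\<lambda>n. real (max_deg n (G n)))"
    using ex unfolding expander_sequence_def by auto
  define e where "e = sqrt (1 / (8 * M))"
  have e: "e > 0" "e^2 = 1 / (8 * M)" unfolding e_def using M by auto
  have ev1: "eventually (\<lambda>n. real (max_deg n (G n)) / real (min_deg n (G n)) > 1/2) sequentially"
    using order_tendstoD(1)[OF rat, of "1/2"] by simp
  have ev2: "eventually (\<lambda>n. real (max_deg n (G n)) / real (min_deg n (G n)) < 2) sequentially"
    using order_tendstoD(2)[OF rat, of 2] by simp
  have ev3: "eventually (\<lambda>n. norm (spectral_lambda n (G n)) \<le> e * norm (real (max_deg n (G n)))) sequentially"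
    using landau_o.smallD[OF lo e(1)] .
  have ev4: "eventually (\<lambda>n. n \<ge> nat \<lceil>8 * M\<rceil> + 2) sequentially"
    by (rule eventually_ge_at_top)
  show "eventually (\<lambda>n. M0 \<le> real (min_deg n (G n))) sequentially"
    using ev1 ev2 ev3 ev4
  proof eventually_elim
    case (elim n)
    define d where "d = real (min_deg n (G n))"
    define D where "D = real (max_deg n (G n))"
    define l where "l = spectral_lambda n (G n)"
    have d: "d > 0" using elim(1) unfolding d_def D_def by (cases "min_deg n (G n) = 0") auto
    have Dd: "D \<le> 2 * d" using elim(2) d unfolding d_def[symmetric] D_def[symmetric]
      by (simp add: divide_less_eq)
    have D0: "D \<ge> 0" unfolding D_def by simp
    have l: "\<bar>l\<bar> \<le> e * D" using elim(3) D0 unfolding l_def[symmetric] D_def[symmetric] by simp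
    have n2: "n \<ge> 2" "real n \<ge> 8 * M" using elim(4) by linarith+
    have si: "real n * d \<le> D^2 + real (n - 1) * l^2"
      using spectral_ineq[OF sg n2(1)] unfolding d_def D_def l_def .
    have "l^2 \<le> (e * D)^2" using l by (metis abs_ge_zero power2_abs power_mono)
    hence "real (n - 1) * l^2 \<le> real n * (e^2 * D^2)"
      by (intro mult_mono) (auto simp: power_mult_distrib)
    hence "real n * d \<le> D^2 * (1 + real n / (8 * M))" using si e(2) by (simp add: algebra_simps)
    also have "\<dots> \<le> (2 * d)^2 * (1 + real n / (8 * M))"
      using Dd D0 M by (intro mult_right_mono power_mono) auto
    finally have "real n * d \<le> 4 * d * d * (1 + real n / (8 * M))" by (simp add: power2_eq_square)
    hence "real n \<le> 4 * d * (1 + real n / (8 * M))" using d by (simp add: mult.assoc)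
    hence "real n \<le> 4 * d + d * real n / (2 * M)" by (simp add: algebra_simps)
    show ?case
    proof (rule ccontr)
      assume "\<not> M0 \<le> real (min_deg n (G n))"
      hence "d < M" using M unfolding d_def by simp
      hence "4 * d + d * real n / (2 * M) < 4 * M + M * real n / (2 * M)"
        using M d n2 by (intro add_strict_mono divide_strict_right_mono mult_strict_right_mono) auto
      also have "\<dots> = 4 * M + real n / 2" using M by simp
      finally show False using \<open>real n \<le> 4 * d + d * real n / (2 * M)\<close> n2 by linarith
    qed
  qed
qed


definition fac :: "nat \<Rightarrow> (nat \<Rightarrow> nat \<Rightarrow> bool) \<Rightarrow> real \<Rightarrow> nat set \<Rightarrow> nat \<Rightarrow> real" where
  "fac n E q T u = (if u \<in> T then 1 - q else 1 - q * real (card (nbrs n E u \<inter> T)) / real (deg n E u))"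

lemma nbrs_sub: "nbrs n E u \<subseteq> {..<n}" unfolding nbrs_def by auto
lemma finite_nbrs[simp]: "finite (nbrs n E u)" using finite_subset[OF nbrs_sub] by auto

lemma nbrs_sym: "simple_graph n E \<Longrightarrow> u < n \<Longrightarrow> v \<in> nbrs n E u \<longleftrightarrow> u \<in> nbrs n E v"
  unfolding simple_graph_def nbrs_def by auto

lemma card_nbrs_single: "card (nbrs n E u \<inter> {v}) = (if v \<in> nbrs n E u then 1 else 0)"
  by auto

lemma card_nbrs_pair: "v \<noteq> v' \<Longrightarrow> card (nbrs n E u \<inter> {v, v'}) =
   (if v \<in> nbrs n E u then 1 else 0) + (if v' \<in> nbrs n E u then 1 else 0)"
  by (cases "v \<in> nbrs n E u"; cases "v' \<in> nbrs n E u") (auto simp: Int_insert_right)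

context
  fixes n :: nat and E :: "nat \<Rightarrow> nat \<Rightarrow> bool" and q d0 :: real
  assumes sg: "simple_graph n E" and q: "0 < q" "q < 1" and d0: "1 \<le> d0"
    and degs: "\<And>u. u < n \<Longrightarrow> d0 \<le> real (deg n E u)"
begin

lemma fac_nonneg: "u < n \<Longrightarrow> 0 \<le> fac n E q T u"
proof -
  assume u: "u < n"
  have dpos: "real (deg n E u) > 0" using degs[OF u] d0 by linarith
  have "card (nbrs n E u \<inter> T) \<le> deg n E u" unfolding deg_def by (rule card_mono) auto
  hence "real (card (nbrs n E u \<inter> T)) / real (deg n E u) \<le> 1" using dpos by simp
  hence "q * (real (card (nbrs n E u \<inter> T)) / real (deg n E u)) \<le> q * 1"
    using q by (intro mult_left_mono) auto
  thus ?thesis unfolding fac_def using q by auto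
qed

lemma prod_single_lower:
  assumes v: "v < n"
  shows "(1 - q) * (1 - q / d0) ^ max_deg n E \<le> (\<Prod>u<n. fac n E q {v} u)"
proof -
  define g where "g u = (if u = v then 1 - q else if u \<in> nbrs n E v then 1 - q / d0 else 1)" for u
  have qd: "0 \<le> 1 - q / d0" "1 - q / d0 \<le> 1" using q d0 by (auto simp: field_simps)
  have "(\<Prod>u<n. g u) \<le> (\<Prod>u<n. fac n E q {v} u)"
  proof (rule prod_mono)
    fix u assume u: "u \<in> {..<n}"
    show "0 \<le> g u \<and> g u \<le> fac n E q {v} u"
    proof (cases "u = v")
      case True thus ?thesis unfolding g_def fac_def using q by auto
    next
      case False
      show ?thesis
      proof (cases "u \<in> nbrs n E v")
        case True
        hence "v \<in> nbrs n E u" using nbrs_sym[OF sg] u by auto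
        hence f: "fac n E q {v} u = 1 - q / real (deg n E u)" unfolding fac_def using False by simp
        have "0 < real (deg n E u) * d0" using degs[of u] u d0 by (intro mult_pos_pos) auto
        hence "q / real (deg n E u) \<le> q / d0" using degs u d0 q by (intro divide_left_mono) auto
        thus ?thesis unfolding g_def f using False True qd by auto
      next
        case nb: False
        hence "v \<notin> nbrs n E u" using nbrs_sym[OF sg] u by auto
        thus ?thesis unfolding g_def fac_def using False nb by simp
      qed
    qed
  qed
  moreover have "(\<Prod>u<n. g u) = (1 - q) * (1 - q / d0) ^ deg n E v"
  proof -
    have "{..<n} = insert v ({..<n} - {v})" using v by auto
    hence "(\<Prod>u<n. g u) = g v * (\<Prod>u\<in>{..<n} - {v}. g u)"
      by (metis finite_Diff finite_lessThan Diff_iff insertI1 prod.insert)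
    also have "(\<Prod>u\<in>{..<n} - {v}. g u) = (\<Prod>u\<in>nbrs n E v. g u)"
      using sg by (intro prod.mono_neutral_right) (auto simp: g_def nbrs_def simple_graph_def)
    also have "\<dots> = (\<Prod>u\<in>nbrs n E v. 1 - q / d0)"
      using sg by (intro prod.cong) (auto simp: g_def nbrs_def simple_graph_def)
    finally show ?thesis unfolding deg_def by (simp add: g_def)
  qed
  moreover have "(1 - q / d0) ^ max_deg n E \<le> (1 - q / d0) ^ deg n E v"
    using qd v by (intro power_decreasing) (auto simp: max_deg_def)
  ultimately show ?thesis using q by (metis (no_types, lifting) diff_ge_0_iff_ge less_eq_real_def
        mult_left_mono order_trans)
qed

lemma fac_pair:
  assumes v: "v < n" and v': "v' < n" and vv: "v \<noteq> v'" and u: "u < n"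
  shows "fac n E q {v, v'} u \<le> fac n E q {v} u * fac n E q {v'} u *
      (if E v v' \<and> u \<in> {v, v'} then 1 / (1 - q / d0) else 1)"
proof -
  have dpos: "real (deg n E u) \<ge> d0" using degs[OF u] .
  have qd: "0 < 1 - q / d0" "1 - q / d0 \<le> 1" using q d0 by (auto simp: field_simps)
  have key: "1 \<le> (1 - q / real (deg n E u)) * (1 / (1 - q / d0))"
  proof -
    have "0 < real (deg n E u) * d0" using dpos d0 by (intro mult_pos_pos) auto
    hence "q / real (deg n E u) \<le> q / d0" using dpos d0 q by (intro divide_left_mono) auto
    hence "1 - q / d0 \<le> 1 - q / real (deg n E u)" by simp
    thus ?thesis using qd by (simp add: field_simps)
  qed
  show ?thesis
  proof (cases "u \<in> {v, v'}")
    case True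
    show ?thesis
    proof (cases "u = v")
      case uv: True
      have "E v v' \<longleftrightarrow> v' \<in> nbrs n E u" using uv v' unfolding nbrs_def by auto
      thus ?thesis using uv vv key q
        by (auto simp: fac_def card_nbrs_single mult.assoc intro: mult_left_le[of _ "1 - q"])
    next
      case uv: False
      hence uv': "u = v'" using True by auto
      have "E v v' \<longleftrightarrow> v \<in> nbrs n E u" using uv' v sg unfolding nbrs_def simple_graph_def by auto
      thus ?thesis using uv' vv key q
        by (auto simp: fac_def card_nbrs_single mult.assoc intro: mult_left_le[of _ "1 - q"])
    qed
  next
    case False
    define a where "a = (if v \<in> nbrs n E u then 1 else 0 :: real)"
    define b where "b = (if v' \<in> nbrs n E u then 1 else 0 :: real)"
    define d where "d = real (deg n E u)"
    have d: "d > 0" using dpos d0 unfolding d_def by linarith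
    have "fac n E q {v, v'} u = 1 - q * (a + b) / d"
      unfolding fac_def a_def b_def d_def using False vv by (auto simp: card_nbrs_pair)
    moreover have "fac n E q {v} u = 1 - q * a / d" "fac n E q {v'} u = 1 - q * b / d"
      unfolding fac_def a_def b_def d_def using False by (auto simp: card_nbrs_single)
    moreover have "1 - q * (a + b) / d \<le> (1 - q * a / d) * (1 - q * b / d)"
    proof -
      have "0 \<le> (q * a / d) * (q * b / d)" unfolding a_def b_def using q d by auto
      thus ?thesis by (simp add: algebra_simps add_divide_distrib)
    qed
    ultimately show ?thesis using False by simp
  qed
qed

end


primrec traj :: "nat \<Rightarrow> nat set \<Rightarrow> (nat \<Rightarrow> nat \<Rightarrow> nat \<times> bool) \<Rightarrow> nat \<Rightarrow> nat set" where
  "traj n I \<omega> 0 = I"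
| "traj n I \<omega> (Suc k) = pp_update n (traj n I \<omega> k) (\<omega> k)"

definition rnd :: "nat \<Rightarrow> (nat \<Rightarrow> nat \<Rightarrow> bool) \<Rightarrow> real \<Rightarrow> (nat \<Rightarrow> nat \<times> bool) pmf" where
  "rnd n E q = Pi_pmf {..<n} (0, False) (vertex_choice n E q)"

definition omg :: "nat \<Rightarrow> (nat \<Rightarrow> nat \<Rightarrow> bool) \<Rightarrow> real \<Rightarrow> nat \<Rightarrow> (nat \<Rightarrow> nat \<Rightarrow> nat \<times> bool) pmf" where
  "omg n E q k = Pi_pmf {..<k} (\<lambda>_. (0, False)) (\<lambda>_. rnd n E q)"

lemma traj_cong: "(\<And>j. j < k \<Longrightarrow> \<omega> j = \<omega>' j) \<Longrightarrow> traj n I \<omega> k = traj n I \<omega>' k"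
  by (induct k) auto

lemma pp_rounds_Suc: "pp_rounds n E q (Suc k) I = bind_pmf (pp_rounds n E q k I) (pp_round n E q)"
  unfolding pp_rounds_def by simp

lemma pp_rounds_traj: "pp_rounds n E q k I = map_pmf (\<lambda>\<omega>. traj n I \<omega> k) (omg n E q k)"
proof (induct k)
  case 0
  show ?case unfolding pp_rounds_def omg_def by simp
next
  case (Suc k)
  have "omg n E q (Suc k) = map_pmf (\<lambda>(y,f). f(k:=y)) (pair_pmf (rnd n E q) (omg n E q k))"
    unfolding omg_def lessThan_Suc by (rule Pi_pmf_insert) auto
  hence "map_pmf (\<lambda>\<omega>. traj n I \<omega> (Suc k)) (omg n E q (Suc k)) =
     map_pmf (\<lambda>(y,f). pp_update n (traj n I f k) y) (pair_pmf (rnd n E q) (omg n E q k))"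
    by (simp add: pmf.map_comp o_def case_prod_unfold traj_cong[of k "_(k:=_)" _ n I])
  also have "\<dots> = bind_pmf (rnd n E q) (\<lambda>y. bind_pmf (omg n E q k) (\<lambda>f. return_pmf (pp_update n (traj n I f k) y)))"
    by (simp add: pair_pmf_def map_bind_pmf bind_return_pmf map_pmf_def bind_assoc_pmf)
  also have "\<dots> = bind_pmf (omg n E q k) (\<lambda>f. bind_pmf (rnd n E q) (\<lambda>y. return_pmf (pp_update n (traj n I f k) y)))"
    by (rule bind_commute_pmf)
  also have "\<dots> = pp_rounds n E q (Suc k) I"
    unfolding pp_rounds_Suc Suc pp_round_def rnd_def
    by (simp add: map_pmf_def bind_assoc_pmf bind_return_pmf)
  finally show ?case by simp
qed

definition okc :: "nat \<Rightarrow> nat set \<Rightarrow> nat \<Rightarrow> (nat \<times> bool) set" where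
  "okc n T u = {(w, b). b \<longrightarrow> (u \<notin> T \<and> w \<notin> T \<and> w < n)}"

lemma traj_avoid:
  assumes I: "I \<subseteq> {..<n}" "T \<inter> I = {}"
    and ok: "\<forall>r<k. \<forall>u<n. \<omega> r u \<in> okc n T u"
  shows "traj n I \<omega> k \<subseteq> {..<n} - T"
  using ok
proof (induct k)
  case 0 thus ?case using I by auto
next
  case (Suc k)
  hence IH: "traj n I \<omega> k \<subseteq> {..<n} - T" and ch: "\<forall>u<n. \<omega> k u \<in> okc n T u" by auto
  show ?case
  proof
    fix x assume "x \<in> traj n I \<omega> (Suc k)"
    hence "x \<in> traj n I \<omega> k \<or> (\<exists>v. x = fst (\<omega> k v) \<and> v \<in> traj n I \<omega> k \<and> v < n \<and> snd (\<omega> k v))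
         \<or> (x < n \<and> fst (\<omega> k x) \<in> traj n I \<omega> k \<and> snd (\<omega> k x))"
      by (auto simp: pp_update_def)
    thus "x \<in> {..<n} - T"
    proof (elim disjE exE conjE)
      fix v assume "x = fst (\<omega> k v)" "v \<in> traj n I \<omega> k" "v < n" "snd (\<omega> k v)"
      thus ?thesis using ch by (cases "\<omega> k v") (auto simp: okc_def)
    next
      assume "x < n" "fst (\<omega> k x) \<in> traj n I \<omega> k" "snd (\<omega> k x)"
      thus ?thesis using ch by (cases "\<omega> k x") (auto simp: okc_def)
    qed (use IH in auto)
  qed
qed




lemma prob_okc:
  assumes N: "nbrs n E u \<noteq> {}" and q: "0 \<le> q" "q \<le> 1"
  shows "measure_pmf.prob (vertex_choice n E q u) (okc n T u) =
     (if u \<in> T then 1 - q else 1 - q * real (card (nbrs n E u \<inter> T)) / real (deg n E u))"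
proof -
  let ?N = "nbrs n E u"
  let ?S = "{w. u \<notin> T \<and> w \<notin> T \<and> w < n}"
  have vc: "vertex_choice n E q u = pair_pmf (pmf_of_set ?N) (bernoulli_pmf q)"
    unfolding vertex_choice_def using N by simp
  have split: "okc n T u = (UNIV \<times> {False}) \<union> (?S \<times> {True})"
    unfolding okc_def by auto
  have "measure_pmf.prob (vertex_choice n E q u) (okc n T u) =
      measure_pmf.prob (vertex_choice n E q u) (UNIV \<times> {False}) +
      measure_pmf.prob (vertex_choice n E q u) (?S \<times> {True})"
    unfolding split by (rule measure_pmf.finite_measure_Union) auto
  also have "measure_pmf.prob (vertex_choice n E q u) (UNIV \<times> {False}) = 1 - q"
    unfolding vc using q by (subst measure_pmf_prob_product) (auto simp: measure_pmf_single)
  also have "measure_pmf.prob (vertex_choice n E q u) (?S \<times> {True}) =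
      measure_pmf.prob (pmf_of_set ?N) ?S * q"
    unfolding vc using q by (subst measure_pmf_prob_product) (auto simp: measure_pmf_single)
  also have "measure_pmf.prob (pmf_of_set ?N) ?S = real (card (?N \<inter> ?S)) / real (card ?N)"
    by (rule measure_pmf_of_set) (use N in auto)
  finally have eq: "measure_pmf.prob (vertex_choice n E q u) (okc n T u) =
      1 - q + real (card (?N \<inter> ?S)) / real (card ?N) * q" .
  show ?thesis
  proof (cases "u \<in> T")
    case True thus ?thesis using eq by simp
  next
    case False
    have "?N \<inter> ?S = ?N - (?N \<inter> T)" using False nbrs_sub[of n E u] by auto
    hence "card (?N \<inter> ?S) = card ?N - card (?N \<inter> T)" by (simp add: card_Diff_subset)
    hence "real (card (?N \<inter> ?S)) = real (card ?N) - real (card (?N \<inter> T))"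
      by (simp add: card_mono of_nat_diff)
    moreover have "card ?N > 0" using N by (simp add: card_gt_0_iff)
    ultimately have "real (card (?N \<inter> ?S)) / real (card ?N) = 1 - real (card (?N \<inter> T)) / real (card ?N)"
      by (metis (no_types, lifting) add_diff_cancel_left' diff_divide_distrib div_self
          of_nat_0_less_iff order_less_irrefl)
    hence "measure_pmf.prob (vertex_choice n E q u) (okc n T u) =
      1 - q + (1 - real (card (?N \<inter> T)) / real (card ?N)) * q" using eq by simp
    thus ?thesis using False unfolding deg_def by (simp add: algebra_simps)
  qed
qed

lemma prob_rnd_okc:
  assumes "\<And>u. u < n \<Longrightarrow> nbrs n E u \<noteq> {}" and "0 \<le> q" "q \<le> 1"
  shows "measure_pmf.prob (rnd n E q) (Pi {..<n} (okc n T)) =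
     (\<Prod>u<n. if u \<in> T then 1 - q else 1 - q * real (card (nbrs n E u \<inter> T)) / real (deg n E u))"
  unfolding rnd_def using assms by (subst measure_Pi_pmf_Pi) (auto intro!: prod.cong simp: prob_okc)

lemma prob_omg_okc:
  "measure_pmf.prob (omg n E q k) (Pi {..<k} (\<lambda>_. Pi {..<n} (okc n T))) =
     measure_pmf.prob (rnd n E q) (Pi {..<n} (okc n T)) ^ k"
  unfolding omg_def by (subst measure_Pi_pmf_Pi) auto


lemma pmf_integrable_indicator[simp]: "integrable (measure_pmf M) (indicator A :: 'a \<Rightarrow> real)"
  by (rule integrable_real_indicator) (auto simp: measure_pmf.emeasure_finite less_top[symmetric])

lemma second_moment:
  fixes M :: "'a pmf" and S :: "'b \<Rightarrow> 'a set"
  assumes W: "finite W"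
  shows "(\<Sum>v\<in>W. measure_pmf.prob M (S v))^2 \<le>
     measure_pmf.prob M (\<Union>v\<in>W. S v) * (\<Sum>v\<in>W. \<Sum>v'\<in>W. measure_pmf.prob M (S v \<inter> S v'))"
proof -
  define Y where "Y = (\<Union>v\<in>W. S v)"
  define a where "a = (\<Sum>v\<in>W. measure_pmf.prob M (S v))"
  define b where "b = (\<Sum>v\<in>W. \<Sum>v'\<in>W. measure_pmf.prob M (S v \<inter> S v'))"
  define p where "p = measure_pmf.prob M Y"
  have key: "0 \<le> b - 2 * t * a + t^2 * p" for t :: real
  proof -
    define F where "F = (\<lambda>x. (\<Sum>v\<in>W. \<Sum>v'\<in>W. indicator (S v \<inter> S v') x)
        - 2 * t * (\<Sum>v\<in>W. indicator (S v) x) + t^2 * indicator Y x :: real)"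
    have F: "F x = ((\<Sum>v\<in>W. indicator (S v) x) - t * indicator Y x)^2" for x
    proof (cases "x \<in> Y")
      case True
      have "(\<Sum>v\<in>W. \<Sum>v'\<in>W. indicator (S v \<inter> S v') x :: real) = (\<Sum>v\<in>W. indicator (S v) x)^2"
        by (simp add: power2_eq_square sum_product indicator_inter_arith)
      thus ?thesis unfolding F_def using True by (simp add: power2_eq_square algebra_simps)
    next
      case False
      hence "\<forall>v\<in>W. x \<notin> S v" unfolding Y_def by auto
      thus ?thesis unfolding F_def using False by (simp add: indicator_def)
    qed
    have "0 \<le> integral\<^sup>L M F" by (rule integral_nonneg_AE) (simp add: F)
    also have "integral\<^sup>L M F = b - 2 * t * a + t^2 * p"
      unfolding F_def a_def b_def p_def
      by (simp add: integral_sum integrable_sum)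
    finally show ?thesis .
  qed
  have ap: "a \<le> real (card W) * p"
  proof -
    have "a \<le> (\<Sum>v\<in>W. p)" unfolding a_def p_def Y_def
      by (intro sum_mono measure_pmf.finite_measure_mono) auto
    thus ?thesis by simp
  qed
  show ?thesis
  proof (cases "p = 0")
    case True
    hence "a \<le> 0" using ap by simp
    moreover have "a \<ge> 0" unfolding a_def by (simp add: sum_nonneg)
    ultimately show ?thesis unfolding a_def[symmetric] b_def[symmetric] p_def[symmetric] Y_def[symmetric]
      using True by simp
  next
    case False
    hence p: "p > 0" unfolding p_def by (simp add: zero_less_measure_iff)
    have "0 \<le> b - 2 * (a / p) * a + (a / p)^2 * p" by (rule key)
    hence "0 \<le> b * p - a^2" using p by (simp add: field_simps power2_eq_square)
    thus ?thesis unfolding a_def[symmetric] b_def[symmetric] p_def[symmetric] Y_def[symmetric]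
      by (simp add: mult.commute)
  qed
qed


lemma okc_inter: "okc n {v} u \<inter> okc n {v'} u = okc n {v, v'} u"
  unfolding okc_def by auto

lemma okc_single_double: "okc n {v, v} u = okc n {v} u" by simp

context
  fixes n :: nat and E :: "nat \<Rightarrow> nat \<Rightarrow> bool" and q d0 :: real
  assumes sg: "simple_graph n E" and q: "0 < q" "q < 1" and d0: "1 \<le> d0"
    and degs: "\<And>u. u < n \<Longrightarrow> d0 \<le> real (deg n E u)"
begin

lemma nbrs_ne: "u < n \<Longrightarrow> nbrs n E u \<noteq> {}"
  using degs[of u] d0 unfolding deg_def by auto

lemma prob_rnd_fac: "measure_pmf.prob (rnd n E q) (Pi {..<n} (okc n T)) = (\<Prod>u<n. fac n E q T u)"
  using prob_rnd_okc[of n E q T] nbrs_ne q unfolding fac_def by simp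

lemma main_bound:
  fixes I W :: "nat set" and K :: real and k :: nat
  assumes I: "I \<subseteq> {..<n}" and W: "W \<subseteq> {..<n} - I" "W \<noteq> {}"
    and K: "K \<ge> 1"
    and Kp: "\<And>v v'. v \<in> W \<Longrightarrow> v' \<in> W \<Longrightarrow> v \<noteq> v' \<Longrightarrow>
        (if E v v' then (1 / (1 - q / d0))^2 else 1) \<le> K"
  shows "1 / (1 / (real (card W) * ((1 - q) * (1 - q / d0) ^ max_deg n E) ^ k) + K ^ k)
     \<le> measure_pmf.prob (pp_rounds n E q k I) {J. card J < n}"
proof -
  define a where "a = (1 - q) * (1 - q / d0) ^ max_deg n E"
  define p where "p T = measure_pmf.prob (rnd n E q) (Pi {..<n} (okc n T))" for T
  define S where "S v = Pi {..<k} (\<lambda>_. Pi {..<n} (okc n {v}))" for v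
  have finW: "finite W" using W(1) finite_subset by blast
  have a0: "a > 0" unfolding a_def using q d0 by (auto simp: field_simps)
  have pv: "a \<le> p {v}" if "v \<in> W" for v
    unfolding a_def p_def prob_rnd_fac using prod_single_lower[OF sg q d0 degs] that W by auto
  have p0: "0 \<le> p T" for T unfolding p_def by simp
  have PS: "measure_pmf.prob (omg n E q k) (S v) = p {v} ^ k" for v
    unfolding S_def p_def by (rule prob_omg_okc)
  have PSS: "measure_pmf.prob (omg n E q k) (S v \<inter> S v') = p {v, v'} ^ k" for v v'
  proof -
    have "S v \<inter> S v' = Pi {..<k} (\<lambda>_. Pi {..<n} (okc n {v, v'}))"
      unfolding S_def Pi_Int okc_inter by simp
    thus ?thesis unfolding p_def by (simp add: prob_omg_okc)
  qed
  have pair: "p {v, v'} \<le> p {v} * p {v'} * K" if "v \<in> W" "v' \<in> W" "v \<noteq> v'" for v v'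
  proof -
    have vn: "v < n" "v' < n" using that W by auto
    have "p {v, v'} \<le> (\<Prod>u<n. fac n E q {v} u * fac n E q {v'} u *
        (if E v v' \<and> u \<in> {v, v'} then 1 / (1 - q / d0) else 1))"
      unfolding p_def prob_rnd_fac
      by (intro prod_mono conjI fac_nonneg[OF sg q d0 degs] fac_pair[OF sg q d0 degs vn that(3)]) auto
    also have "\<dots> = p {v} * p {v'} * (\<Prod>u<n. if E v v' \<and> u \<in> {v, v'} then 1 / (1 - q / d0) else 1)"
      unfolding p_def prob_rnd_fac by (simp add: prod.distrib)
    also have "(\<Prod>u<n. if E v v' \<and> u \<in> {v, v'} then 1 / (1 - q / d0) else 1) =
        (if E v v' then (1 / (1 - q / d0))^2 else 1)"
    proof (cases "E v v'")
      case True
      have "(\<Prod>u<n. if E v v' \<and> u \<in> {v, v'} then 1 / (1 - q / d0) else 1) =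
          (\<Prod>u\<in>{v, v'}. 1 / (1 - q / d0))"
        using True vn by (intro prod.mono_neutral_cong_right) auto
      thus ?thesis using True that(3) by (simp add: power2_eq_square)
    qed simp
    also have "p {v} * p {v'} * (if E v v' then (1 / (1 - q / d0))^2 else 1) \<le> p {v} * p {v'} * K"
      using Kp[OF that] p0 by (intro mult_left_mono) auto
    finally show ?thesis .
  qed
  define e where "e = (\<Sum>v\<in>W. p {v} ^ k)"
  have e_low: "real (card W) * a ^ k \<le> e"
  proof -
    have "(\<Sum>v\<in>W. a ^ k) \<le> e" unfolding e_def
      using pv a0 by (intro sum_mono power_mono) auto
    thus ?thesis by simp
  qed
  have cw: "card W > 0" using finW W(2) by (simp add: card_gt_0_iff)
  have e0: "e > 0" using e_low a0 cw by (smt (verit) of_nat_0_less_iff zero_less_mult_iff zero_less_power)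
  define B where "B = (\<Sum>v\<in>W. \<Sum>v'\<in>W. measure_pmf.prob (omg n E q k) (S v \<inter> S v'))"
  have B: "B \<le> e + K ^ k * e^2"
  proof -
    have "B \<le> (\<Sum>v\<in>W. p {v} ^ k + (\<Sum>v'\<in>W. K ^ k * (p {v} ^ k * p {v'} ^ k)))"
      unfolding B_def
    proof (rule sum_mono)
      fix v assume v: "v \<in> W"
      have "(\<Sum>v'\<in>W. measure_pmf.prob (omg n E q k) (S v \<inter> S v')) =
          measure_pmf.prob (omg n E q k) (S v \<inter> S v) +
          (\<Sum>v'\<in>W - {v}. measure_pmf.prob (omg n E q k) (S v \<inter> S v'))"
        using v finW by (simp add: sum.remove)
      also have "measure_pmf.prob (omg n E q k) (S v \<inter> S v) = p {v} ^ k" using PS by simp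
      also have "(\<Sum>v'\<in>W - {v}. measure_pmf.prob (omg n E q k) (S v \<inter> S v')) \<le>
          (\<Sum>v'\<in>W - {v}. K ^ k * (p {v} ^ k * p {v'} ^ k))"
      proof (rule sum_mono)
        fix v' assume v': "v' \<in> W - {v}"
        have "p {v, v'} ^ k \<le> (p {v} * p {v'} * K) ^ k"
          using pair[OF v _ _] v' p0 by (intro power_mono) auto
        thus "measure_pmf.prob (omg n E q k) (S v \<inter> S v') \<le> K ^ k * (p {v} ^ k * p {v'} ^ k)"
          unfolding PSS by (simp add: power_mult_distrib mult_ac)
      qed
      also have "\<dots> \<le> (\<Sum>v'\<in>W. K ^ k * (p {v} ^ k * p {v'} ^ k))"
        using finW K p0 by (intro sum_mono2) auto
      finally show "(\<Sum>v'\<in>W. measure_pmf.prob (omg n E q k) (S v \<inter> S v'))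
          \<le> p {v} ^ k + (\<Sum>v'\<in>W. K ^ k * (p {v} ^ k * p {v'} ^ k))" by simp
    qed
    also have "\<dots> = e + K ^ k * e^2"
      unfolding e_def by (simp add: sum.distrib sum_distrib_left power2_eq_square sum_product mult_ac)
    finally show ?thesis .
  qed
  have sm: "e^2 \<le> measure_pmf.prob (omg n E q k) (\<Union>v\<in>W. S v) * B"
    using second_moment[OF finW, of "omg n E q k" S] unfolding B_def e_def PS .
  have sub: "(\<Union>v\<in>W. S v) \<subseteq> (\<lambda>\<omega>. traj n I \<omega> k) -` {J. card J < n}"
  proof
    fix \<omega> assume "\<omega> \<in> (\<Union>v\<in>W. S v)"
    then obtain v where v: "v \<in> W" "\<omega> \<in> S v" by auto
    have "traj n I \<omega> k \<subseteq> {..<n} - {v}"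
      by (rule traj_avoid) (use I v W in \<open>auto simp: S_def\<close>)
    moreover have "card ({..<n} - {v}) < n"
    proof -
      have "v < n" using v W by auto
      hence "card ({..<n} - {v}) = n - 1" by simp
      thus ?thesis using \<open>v < n\<close> by simp
    qed
    ultimately have "card (traj n I \<omega> k) < n"
      by (meson card_mono finite_Diff finite_lessThan le_less_trans)
    thus "\<omega> \<in> (\<lambda>\<omega>. traj n I \<omega> k) -` {J. card J < n}" by simp
  qed
  have "measure_pmf.prob (omg n E q k) (\<Union>v\<in>W. S v) \<le> measure_pmf.prob (pp_rounds n E q k I) {J. card J < n}"
    unfolding pp_rounds_traj measure_map_pmf by (rule measure_pmf.finite_measure_mono[OF sub]) simp
  moreover have "1 / (1 / (real (card W) * a ^ k) + K ^ k) \<le> measure_pmf.prob (omg n E q k) (\<Union>v\<in>W. S v)"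
  proof -
    have Bp: "B > 0" using B sm e0
      by (smt (verit, ccfv_SIG) measure_nonneg mult_nonneg_nonpos zero_less_power)
    have "e^2 / B \<le> measure_pmf.prob (omg n E q k) (\<Union>v\<in>W. S v)"
      using sm Bp by (simp add: divide_le_eq)
    moreover have "e^2 / (e + K ^ k * e^2) \<le> e^2 / B"
      using B Bp e0 by (intro divide_left_mono) auto
    moreover have "e^2 / (e + K ^ k * e^2) = 1 / (1 / e + K ^ k)"
    proof -
      have Kk: "0 \<le> K ^ k" using K by simp
      have "e + K ^ k * e^2 = e * (1 + e * K ^ k)" by (simp add: algebra_simps power2_eq_square)
      moreover have "1 / e + K ^ k = (1 + e * K ^ k) / e" using e0 by (simp add: field_simps)
      moreover have "1 + e * K ^ k > 0" using e0 Kk by (simp add: add_pos_nonneg)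
      ultimately show ?thesis using e0 by (simp add: power2_eq_square)
    qed
    moreover have "1 / (1 / (real (card W) * a ^ k) + K ^ k) \<le> 1 / (1 / e + K ^ k)"
    proof -
      have "real (card W) * a ^ k > 0" using cw a0 by simp
      hence "1 / e \<le> 1 / (real (card W) * a ^ k)" using e_low by (intro divide_left_mono) auto
      moreover have "0 < 1 / e + K ^ k" using e0 K by (simp add: add_pos_nonneg)
      ultimately show ?thesis by (intro divide_left_mono) auto
    qed
    ultimately show ?thesis by linarith
  qed
  ultimately show ?thesis unfolding a_def by linarith
qed

end


lemma indep_subset:
  assumes sg: "simple_graph n E"
  shows "finite U \<Longrightarrow> U \<subseteq> {..<n} \<Longrightarrow> \<exists>W \<subseteq> U. (\<forall>v\<in>W. \<forall>v'\<in>W. \<not> E v v') \<and>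
     card U \<le> card W * (max_deg n E + 1)"
proof (induct "card U" arbitrary: U rule: less_induct)
  case (less U)
  show ?case
  proof (cases "U = {}")
    case True thus ?thesis by auto
  next
    case False
    then obtain v where v: "v \<in> U" by auto
    define U' where "U' = U - insert v (nbrs n E v)"
    have vn: "v < n" using v less.prems by auto
    have "U' \<subset> U" unfolding U'_def using v by auto
    hence "card U' < card U" using less.prems(1) by (rule psubset_card_mono[rotated])
    then obtain W' where W': "W' \<subseteq> U'" "\<forall>v\<in>W'. \<forall>v'\<in>W'. \<not> E v v'"
        "card U' \<le> card W' * (max_deg n E + 1)"
      using less.hyps[of U'] less.prems unfolding U'_def by auto
    define W where "W = insert v W'"
    have vW': "v \<notin> W'" using W'(1) unfolding U'_def by auto
    have "finite U'" unfolding U'_def using less.prems(1) by simp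
    hence finW': "finite W'" using W'(1) by (rule finite_subset[rotated])
    have noadj: "\<not> E v w \<and> \<not> E w v" if "w \<in> W'" for w
    proof -
      have "w \<in> U" "w \<notin> nbrs n E v" using that W'(1) unfolding U'_def by auto
      hence "\<not> E v w" using less.prems(2) unfolding nbrs_def by auto
      moreover have "\<not> E w v" using \<open>\<not> E v w\<close> sg unfolding simple_graph_def by auto
      ultimately show ?thesis by simp
    qed
    have indep: "\<forall>x\<in>W. \<forall>y\<in>W. \<not> E x y"
      unfolding W_def using W'(2) noadj sg unfolding simple_graph_def by auto
    have "card U \<le> card U' + card (insert v (nbrs n E v))"
    proof -
      have "U \<subseteq> U' \<union> insert v (nbrs n E v)" unfolding U'_def by auto
      hence "card U \<le> card (U' \<union> insert v (nbrs n E v))"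
        using less.prems(1) by (intro card_mono) (auto simp: U'_def)
      also have "\<dots> \<le> card U' + card (insert v (nbrs n E v))" by (rule card_Un_le)
      finally show ?thesis .
    qed
    also have "card (insert v (nbrs n E v)) \<le> max_deg n E + 1"
    proof -
      have "card (insert v (nbrs n E v)) \<le> Suc (deg n E v)" unfolding deg_def
        by (simp add: card_insert_if)
      moreover have "deg n E v \<le> max_deg n E" unfolding max_deg_def using vn by (intro Max_ge) auto
      ultimately show ?thesis by simp
    qed
    finally have "card U \<le> card W' * (max_deg n E + 1) + (max_deg n E + 1)" using W'(3) by linarith
    also have "\<dots> = card W * (max_deg n E + 1)" unfolding W_def using vW' finW' by simp
    finally have cU: "card U \<le> card W * (max_deg n E + 1)" .
    have "W \<subseteq> U" unfolding W_def using W'(1) v unfolding U'_def by auto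
    thus ?thesis using indep cU by blast
  qed
qed


lemma per_n_bound:
  fixes n :: nat and E :: "nat \<Rightarrow> nat \<Rightarrow> bool" and q \<beta> \<gamma> e :: real and I :: "nat set" and k :: nat
  assumes sg: "simple_graph n E" and q: "0 < q" "q < 1"
    and I: "I \<subseteq> {..<n}" "real (card I) \<le> real n / 2"
    and n1: "n \<ge> 1"
    and d1: "1 \<le> real (min_deg n E)"
    and \<gamma>: "\<gamma> = 1 - \<beta>" "0 < \<gamma>"
    and ak: "real n powr (- \<beta>) \<le> ((1 - q) * (1 - q / real (min_deg n E)) ^ max_deg n E) ^ k"
    and Kk: "real (max_deg n E) \<ge> real n powr (\<gamma> / 2) \<Longrightarrow>
        ((1 / (1 - q / real (min_deg n E)))^2) ^ k \<le> 1 + e"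
    and small: "4 / real n powr (\<gamma> / 2) \<le> e" and e: "0 \<le> e"
  shows "1 / (1 + 2 * e) \<le> measure_pmf.prob (pp_rounds n E q k I) {J. card J < n}"
proof -
  define d0 where "d0 = real (min_deg n E)"
  define a where "a = (1 - q) * (1 - q / d0) ^ max_deg n E"
  define x where "x = real n"
  have x1: "x \<ge> 1" unfolding x_def using n1 by simp
  have degs: "\<And>u. u < n \<Longrightarrow> d0 \<le> real (deg n E u)" unfolding d0_def using min_le_deg by simp
  have d0: "1 \<le> d0" using d1 unfolding d0_def .
  define U where "U = {..<n} - I"
  have cU: "real (card U) \<ge> x / 2"
  proof -
    have "finite I" using I(1) finite_subset by blast
    hence "card U = n - card I" unfolding U_def using I(1) by (simp add: card_Diff_subset)
    moreover have "card I \<le> n" using I(1) by (metis card_lessThan card_mono finite_lessThan)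
    ultimately show ?thesis using I(2) unfolding x_def by (simp add: of_nat_diff)
  qed
  have xg: "x powr (\<gamma> / 2) \<ge> 1" using x1 \<gamma> by (simp add: ge_one_powr_ge_zero)
  have a0: "a > 0" unfolding a_def using q d0 by (auto simp: field_simps)
  have ak': "x powr (- \<beta>) \<le> a ^ k" using ak unfolding a_def d0_def x_def .
  have key: "1 / (1 + 2 * e) \<le> 1 / (1 / (real (card W) * a ^ k) + K ^ k)"
    if W: "real (card W) * a ^ k \<ge> x powr (\<gamma> / 2) / 4" and K: "K ^ k \<le> 1 + e" and K0: "K \<ge> 1"
    for W :: "nat set" and K :: real
  proof -
    have p: "x powr (\<gamma> / 2) / 4 > 0" using xg x1 by simp
    have Wp: "real (card W) * a ^ k > 0" using W p by linarith
    have "1 / (real (card W) * a ^ k) \<le> 1 / (x powr (\<gamma> / 2) / 4)"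
      using W p Wp by (intro divide_left_mono) auto
    also have "\<dots> = 4 / real n powr (\<gamma> / 2)" unfolding x_def by simp
    finally have "1 / (real (card W) * a ^ k) \<le> e" using small by simp
    hence "1 / (real (card W) * a ^ k) + K ^ k \<le> 1 + 2 * e" using K by simp
    moreover have "0 < 1 / (real (card W) * a ^ k) + K ^ k"
      using Wp K0 by (intro add_nonneg_pos) auto
    ultimately show ?thesis by (intro frac_le) auto
  qed
  show ?thesis
  proof (cases "real (max_deg n E) \<ge> x powr (\<gamma> / 2)")
    case True
    define K where "K = (1 / (1 - q / d0))^2"
    have K1: "K \<ge> 1" unfolding K_def using q d0 by (auto simp: field_simps)
    have UW: "U \<subseteq> {..<n} - I" "U \<noteq> {}"
    proof -
      show "U \<subseteq> {..<n} - I" unfolding U_def by simp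
      show "U \<noteq> {}" using cU x1 by auto
    qed
    have "1 / (1 / (real (card U) * a ^ k) + K ^ k) \<le> measure_pmf.prob (pp_rounds n E q k I) {J. card J < n}"
      unfolding a_def by (rule main_bound[OF sg q d0 degs I(1) UW K1]) (use K1 in \<open>auto simp: K_def\<close>)
    moreover have "1 / (1 + 2 * e) \<le> 1 / (1 / (real (card U) * a ^ k) + K ^ k)"
    proof (rule key[OF _ _ K1])
      show "K ^ k \<le> 1 + e" using Kk True unfolding K_def d0_def x_def by simp
      have "x powr (\<gamma> / 2) / 4 \<le> x / 2 * x powr (- \<beta>)"
      proof -
        have "x / 2 * x powr (- \<beta>) = x powr \<gamma> / 2" using x1 \<gamma>(1)
          by (simp add: powr_diff powr_minus_divide)
        moreover have "x powr (\<gamma> / 2) \<le> x powr \<gamma>" using x1 \<gamma> by (intro powr_mono) auto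
        ultimately show ?thesis using powr_ge_zero[of x \<gamma>] by linarith
      qed
      also have "\<dots> \<le> real (card U) * a ^ k"
        using cU ak' x1 by (intro mult_mono) auto
      finally show "x powr (\<gamma> / 2) / 4 \<le> real (card U) * a ^ k" .
    qed
    ultimately show ?thesis by linarith
  next
    case False
    obtain W where W: "W \<subseteq> U" "\<forall>v\<in>W. \<forall>v'\<in>W. \<not> E v v'" "card U \<le> card W * (max_deg n E + 1)"
      using indep_subset[OF sg, of U] unfolding U_def by auto
    have cW: "real (card W) \<ge> x powr (1 - \<gamma> / 2) / 4"
    proof -
      have "x / 2 \<le> real (card W) * (real (max_deg n E) + 1)"
        using cU W(3) by (metis (no_types, lifting) of_nat_1 of_nat_add of_nat_le_iff of_nat_mult order_trans)
      also have "\<dots> \<le> real (card W) * (2 * x powr (\<gamma> / 2))"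
        using False xg by (intro mult_left_mono) auto
      finally have "x \<le> real (card W) * (4 * x powr (\<gamma> / 2))" by simp
      hence "x / (4 * x powr (\<gamma> / 2)) \<le> real (card W)" using xg by (simp add: divide_le_eq)
      moreover have "x / (4 * x powr (\<gamma> / 2)) = x powr (1 - \<gamma> / 2) / 4" using x1
        by (simp add: powr_diff)
      ultimately show ?thesis by simp
    qed
    have UW: "W \<subseteq> {..<n} - I" "W \<noteq> {}"
    proof -
      show "W \<subseteq> {..<n} - I" using W(1) unfolding U_def .
      have "x powr (1 - \<gamma> / 2) > 0" using x1 by simp
      thus "W \<noteq> {}" using cW by auto
    qed
    have "1 / (1 / (real (card W) * a ^ k) + 1 ^ k) \<le> measure_pmf.prob (pp_rounds n E q k I) {J. card J < n}"
      unfolding a_def by (rule main_bound[OF sg q d0 degs I(1) UW]) (use W(2) in auto)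
    moreover have "1 / (1 + 2 * e) \<le> 1 / (1 / (real (card W) * a ^ k) + 1 ^ k)"
    proof (rule key)
      have "(1 - \<gamma> / 2) + (- \<beta>) = \<gamma> / 2" using \<gamma>(1) by (simp add: field_simps)
      hence "x powr (\<gamma> / 2) / 4 = x powr (1 - \<gamma> / 2) / 4 * x powr (- \<beta>)"
        by (metis powr_add times_divide_eq_left)
      also have "\<dots> \<le> real (card W) * a ^ k"
        using cW ak' x1 by (intro mult_mono) auto
      finally show "x powr (\<gamma> / 2) / 4 \<le> real (card W) * a ^ k" .
    qed (use e in auto)
    ultimately show ?thesis by linarith
  qed
qed


lemma ak_bound:
  fixes q L c0 \<eta> \<rho> \<delta> x :: real and D k :: nat
  assumes q: "0 < q" "q < 1" and L: "L = q - ln (1 - q)" and c0: "0 \<le> c0"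
    and \<eta>: "0 < \<eta>" and \<rho>: "0 < \<rho>" "\<rho> \<le> 1" "\<rho> \<le> \<eta> * L / q"
    and \<delta>: "2 \<le> \<delta>" "2 * q / \<delta> \<le> \<rho> / 3"
    and D: "real D \<le> (1 + \<rho> / 3) * \<delta>"
    and x: "1 \<le> x" and k: "real k \<le> c0 * ln x / L"
  shows "x powr (- (c0 * (1 + \<eta>))) \<le> ((1 - q) * (1 - q / \<delta>) ^ D) ^ k"
proof -
  have Lp: "L > 0" using L q by (smt (verit) ln_less_zero_iff)
  define t where "t = q / \<delta>"
  have t: "0 < t" "t \<le> 1 / 2" "2 * t \<le> \<rho> / 3" using q \<delta> unfolding t_def by (auto simp: field_simps)
  define a where "a = (1 - q) * (1 - t) ^ D"
  have a0: "a > 0" unfolding a_def using q t by simp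
  have a1: "a \<le> 1" unfolding a_def using q t by (intro mult_le_one power_le_one) auto
  have f1: "ln a = ln (1 - q) + real D * ln (1 - t)"
    unfolding a_def using q t by (simp add: ln_mult ln_realpow)
  have "ln (1 - t) \<ge> - t - 2 * t^2" using ln_one_minus_pos_lower_bound[of t] t by simp
  hence f2: "real D * ln (1 - t) \<ge> real D * (- t - 2 * t^2)" by (intro mult_left_mono) auto
  have f3: "real D * (t + 2 * t^2) \<le> q + \<eta> * L"
  proof -
    have "real D * (t + 2 * t^2) = real D * t * (1 + 2 * t)" by (simp add: algebra_simps power2_eq_square)
    also have "\<dots> \<le> ((1 + \<rho> / 3) * \<delta>) * t * (1 + \<rho> / 3)"
      using D t by (intro mult_mono) auto
    also have "\<dots> = q * (1 + \<rho> / 3)^2" unfolding t_def using \<delta> by (simp add: power2_eq_square)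
    also have "\<dots> \<le> q * (1 + \<rho>)"
    proof -
      have "(1 + \<rho> / 3)^2 \<le> 1 + \<rho>" using \<rho> by (simp add: power2_eq_square field_simps)
      thus ?thesis using q by simp
    qed
    also have "\<dots> \<le> q + \<eta> * L" using \<rho>(3) q by (simp add: field_simps)
    finally show ?thesis .
  qed
  have f4: "real D * (- t - 2 * t^2) = - (real D * (t + 2 * t^2))" by (simp add: algebra_simps)
  have f5: "ln (1 - q) = q - L" using L by simp
  have f6: "- (1 + \<eta>) * L = - L - \<eta> * L" by (simp add: algebra_simps)
  have la: "ln a \<ge> - (1 + \<eta>) * L" unfolding f6 using f1 f2 f3 f4 f5 by linarith
  have lx: "ln x \<ge> 0" using x by simp
  have "a ^ k = exp (real k * ln a)" using a0 by (simp add: exp_of_nat_mult)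
  also have "real k * ln a \<ge> (c0 * ln x / L) * ln a"
    using k a0 a1 by (intro mult_right_mono_neg) auto
  hence "exp (real k * ln a) \<ge> exp ((c0 * ln x / L) * ln a)" by simp
  moreover have "(c0 * ln x / L) * ln a \<ge> (c0 * ln x / L) * (- (1 + \<eta>) * L)"
    using la c0 lx Lp by (intro mult_left_mono) auto
  moreover have "(c0 * ln x / L) * (- (1 + \<eta>) * L) = - (c0 * (1 + \<eta>)) * ln x" using Lp by (simp add: field_simps)
  ultimately have "exp (- (c0 * (1 + \<eta>)) * ln x) \<le> a ^ k"
    using \<open>a ^ k = _\<close> by (metis exp_le_cancel_iff order_trans)
  moreover have "exp (- (c0 * (1 + \<eta>)) * ln x) = x powr (- (c0 * (1 + \<eta>)))"
    using x by (simp add: powr_def mult.commute)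
  ultimately show ?thesis unfolding a_def t_def by simp
qed

lemma Kk_bound:
  fixes q L c0 \<delta> x e \<gamma> :: real and k :: nat
  assumes q: "0 < q" "q < 1" and Lp: "L > 0" and c0: "0 \<le> c0"
    and \<delta>: "2 \<le> \<delta>" "x powr (\<gamma> / 2) / 2 \<le> \<delta>"
    and x: "1 \<le> x" and k: "real k \<le> c0 * ln x / L"
    and small: "8 * q * c0 * ln x / (L * x powr (\<gamma> / 2)) \<le> ln (1 + e)" and e: "0 \<le> e"
  shows "((1 / (1 - q / \<delta>))^2) ^ k \<le> 1 + e"
proof -
  define t where "t = q / \<delta>"
  have t: "0 < t" "t \<le> 1 / 2" using q \<delta> unfolding t_def by (auto simp: field_simps)
  have "ln (1 - t) \<ge> - t - 2 * t^2" using ln_one_minus_pos_lower_bound[of t] t by simp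
  moreover have "2 * t^2 \<le> t" using t by (simp add: power2_eq_square)
  ultimately have l1: "- ln (1 - t) \<le> 2 * t" by simp
  have xp: "x powr (\<gamma> / 2) > 0" using x by simp
  have pos: "1 / (1 - t) > 0" using t by simp
  have eq1: "((1 / (1 - t))^2) ^ k = exp (ln (1 / (1 - t))) ^ (2 * k)"
    using pos by (simp add: power_mult)
  also have "\<dots> = exp (real (2 * k) * ln (1 / (1 - t)))" by (rule exp_of_nat_mult[symmetric])
  also have "ln (1 / (1 - t)) = - ln (1 - t)" using t by (simp add: ln_div)
  finally have eq: "((1 / (1 - t))^2) ^ k = exp (real (2 * k) * (- ln (1 - t)))" .
  have "real (2 * k) * (- ln (1 - t)) \<le> (c0 * ln x / L) * (4 * t)"
  proof -
    have "real (2 * k) * (- ln (1 - t)) \<le> (2 * (c0 * ln x / L)) * (2 * t)"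
      using k l1 t by (intro mult_mono) auto
    thus ?thesis by (simp add: mult_ac)
  qed
  also have "(c0 * ln x / L) * (4 * t) \<le> 8 * q * c0 * ln x / (L * x powr (\<gamma> / 2))"
  proof -
    have "t \<le> 2 * q / x powr (\<gamma> / 2)"
      unfolding t_def using q \<delta> xp by (simp add: field_simps)
    hence "(c0 * ln x / L) * (4 * t) \<le> (c0 * ln x / L) * (4 * (2 * q / x powr (\<gamma> / 2)))"
      using c0 x Lp by (intro mult_left_mono) auto
    thus ?thesis by (simp add: field_simps)
  qed
  also have "\<dots> \<le> ln (1 + e)" by (rule small)
  finally have "real (2 * k) * (- ln (1 - t)) \<le> ln (1 + e)" .
  hence "exp (real (2 * k) * (- ln (1 - t))) \<le> exp (ln (1 + e))" by simp
  also have "\<dots> = 1 + e" using e by simp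
  finally have "((1 / (1 - t))^2) ^ k \<le> 1 + e" unfolding eq .
  thus ?thesis unfolding t_def .
qed


theorem lemma3p6:
  fixes G :: "nat \<Rightarrow> nat \<Rightarrow> nat \<Rightarrow> bool" and q c :: real and I :: "nat \<Rightarrow> nat set"
  assumes "expander_sequence G"
    and "0 < q" and "q < 1"
    and "\<And>n. I n \<subseteq> {..<n}"
    and "\<And>n. real (card (I n)) \<le> real n / 2"
    and "c < 1"
  shows "(\<lambda>n. measure_pmf.prob
            (pp_rounds n (G n) q (nat \<lfloor>c * (ln (real n) / (q - ln (1 - q)))\<rfloor>) (I n))
            {J. card J < n}) \<longlonglongrightarrow> 1"
proof -
  note ex = assms(1) and q = assms(2,3) and Isub = assms(4) and Icard = assms(5) and c = assms(6)
  define L where "L = q - ln (1 - q)"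
  have Lp: "L > 0" unfolding L_def using q by (smt (verit) ln_less_zero_iff)
  define c0 where "c0 = max c (1/2)"
  have c0: "1/2 \<le> c0" "c0 < 1" "c \<le> c0" unfolding c0_def using c by auto
  define \<beta> where "\<beta> = (1 + c0) / 2"
  define \<gamma> where "\<gamma> = 1 - \<beta>"
  have \<gamma>: "\<gamma> > 0" unfolding \<gamma>_def \<beta>_def using c0 by simp
  define \<eta> where "\<eta> = \<beta> / c0 - 1"
  have \<eta>: "\<eta> > 0" unfolding \<eta>_def \<beta>_def using c0 by (simp add: field_simps)
  have c0\<eta>: "c0 * (1 + \<eta>) = \<beta>" unfolding \<eta>_def using c0 by simp
  define \<rho> where "\<rho> = min 1 (\<eta> * L / q)"
  have \<rho>: "0 < \<rho>" "\<rho> \<le> 1" "\<rho> \<le> \<eta> * L / q" unfolding \<rho>_def using \<eta> Lp q by auto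
  define D0 where "D0 = max 2 (6 * q / \<rho>)"
  have sg: "\<And>n. simple_graph n (G n)" using ex unfolding expander_sequence_def by auto
  have rat: "(\<lambda>n. real (max_deg n (G n)) / real (min_deg n (G n))) \<longlonglongrightarrow> 1"
    using ex unfolding expander_sequence_def by auto
  define P where "P n = measure_pmf.prob
            (pp_rounds n (G n) q (nat \<lfloor>c * (ln (real n) / (q - ln (1 - q)))\<rfloor>) (I n))
            {J. card J < n}" for n
  have P1: "P n \<le> 1" for n unfolding P_def by simp
  have kb: "real (nat \<lfloor>c * (ln (real n) / (q - ln (1 - q)))\<rfloor>) \<le> c0 * ln (real n) / L"
    if n: "n \<ge> 1" for n
  proof -
    have ln0: "ln (real n) \<ge> 0" using n by simp
    have y: "c * (ln (real n) / L) \<le> c0 * ln (real n) / L"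
      using c0 ln0 Lp by (simp add: divide_right_mono mult_right_mono)
    have "c0 * ln (real n) / L \<ge> 0" using c0 ln0 Lp by simp
    thus ?thesis using y unfolding L_def[symmetric]
      by (cases "c * (ln (real n) / L) < 0") (auto intro: order_trans[OF of_int_floor_le])
  qed
  show ?thesis unfolding P_def[symmetric]
  proof (rule order_tendstoI)
    fix a :: real assume "a > 1"
    hence "\<And>n. P n < a" using P1 by (meson le_less_trans)
    thus "eventually (\<lambda>n. P n < a) sequentially" by simp
  next
    fix a :: real assume a: "a < 1"
    define e where "e = (1 - a) / 4"
    have e: "e > 0" unfolding e_def using a by simp
    have E1: "eventually (\<lambda>n. D0 \<le> real (min_deg n (G n))) sequentially"
      using expander_min_deg[OF ex] unfolding filterlim_at_top by blast
    have E2: "eventually (\<lambda>n. real (max_deg n (G n)) / real (min_deg n (G n)) < 1 + \<rho> / 3) sequentially"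
      using order_tendstoD(2)[OF rat, of "1 + \<rho> / 3"] \<rho> by simp
    have E3: "eventually (\<lambda>n. 1 \<le> n) sequentially" by (rule eventually_ge_at_top)
    have "(\<lambda>n. 4 * real n powr (- (\<gamma> / 2))) \<longlonglongrightarrow> 4 * 0"
      by (intro tendsto_mult tendsto_const tendsto_neg_powr filterlim_real_sequentially) (use \<gamma> in simp)
    hence E4: "eventually (\<lambda>n. 4 * real n powr (- (\<gamma> / 2)) < e) sequentially"
      using e by (intro order_tendstoD(2)) auto
    have lp: "ln (1 + e) * L / (8 * q * c0) > 0" using e Lp q c0 by (intro divide_pos_pos mult_pos_pos) auto
    have E5: "eventually (\<lambda>n. ln (real n) / real n powr (\<gamma> / 2) < ln (1 + e) * L / (8 * q * c0)) sequentially"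
      using order_tendstoD(2)[OF lim_ln_over_power lp] \<gamma> by simp
    show "eventually (\<lambda>n. a < P n) sequentially"
      using E1 E2 E3 E4 E5
    proof eventually_elim
      case (elim n)
      define \<delta> where "\<delta> = real (min_deg n (G n))"
      define \<Delta> where "\<Delta> = real (max_deg n (G n))"
      define x where "x = real n"
      define k where "k = nat \<lfloor>c * (ln (real n) / (q - ln (1 - q)))\<rfloor>"
      have x1: "1 \<le> x" unfolding x_def using elim(3) by simp
      have \<delta>: "2 \<le> \<delta>" "6 * q / \<rho> \<le> \<delta>" using elim(1) unfolding \<delta>_def D0_def by auto
      have \<delta>2: "2 * q / \<delta> \<le> \<rho> / 3" using \<delta> \<rho> q by (simp add: field_simps)
      have \<Delta>\<delta>: "\<Delta> \<le> (1 + \<rho> / 3) * \<delta>" using elim(2) \<delta> unfolding \<delta>_def[symmetric] \<Delta>_def[symmetric]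
        by (simp add: divide_less_eq)
      have kx: "real k \<le> c0 * ln x / L" unfolding k_def x_def using kb[OF elim(3)] .
      have ak: "real n powr (- \<beta>) \<le> ((1 - q) * (1 - q / real (min_deg n (G n))) ^ max_deg n (G n)) ^ k"
        using ak_bound[OF q L_def _ \<eta> \<rho> \<delta>(1) \<delta>2 _ x1 kx, of "max_deg n (G n)"] c0 c0\<eta> \<Delta>\<delta>
        unfolding \<delta>_def \<Delta>_def x_def by simp
      have small: "4 / real n powr (\<gamma> / 2) \<le> e"
        using elim(4) by (simp add: powr_minus_divide)
      have Kk: "((1 / (1 - q / real (min_deg n (G n))))^2) ^ k \<le> 1 + e"
        if big: "real (max_deg n (G n)) \<ge> real n powr (\<gamma> / 2)"
      proof -
        have "(1 + \<rho> / 3) * \<delta> \<le> 2 * \<delta>" using \<rho> \<delta> by (intro mult_right_mono) auto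
        hence "x powr (\<gamma> / 2) / 2 \<le> \<delta>"
          using big \<Delta>\<delta> unfolding \<Delta>_def[symmetric] x_def[symmetric] by linarith
        moreover have "8 * q * c0 * ln x / (L * x powr (\<gamma> / 2)) \<le> ln (1 + e)"
        proof -
          have "8 * q * c0 * ln x / (L * x powr (\<gamma> / 2)) = (8 * q * c0 / L) * (ln x / x powr (\<gamma> / 2))"
            by simp
          also have "\<dots> \<le> (8 * q * c0 / L) * (ln (1 + e) * L / (8 * q * c0))"
            using elim(5) q c0 Lp unfolding x_def by (intro mult_left_mono) auto
          also have "\<dots> = ln (1 + e)" using q c0 Lp by simp
          finally show ?thesis .
        qed
        ultimately show ?thesis
          using Kk_bound[OF q Lp _ \<delta>(1) _ x1 kx _ less_imp_le[OF e]] c0 unfolding \<delta>_def by simp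
      qed
      have "1 / (1 + 2 * e) \<le> P n"
        unfolding P_def k_def[symmetric]
        by (rule per_n_bound[OF sg q Isub Icard elim(3) _ \<gamma>_def \<gamma> ak Kk small less_imp_le[OF e]])
          (use \<delta> in \<open>simp add: \<delta>_def\<close>)
      moreover have "a < 1 / (1 + 2 * e)"
      proof -
        have "a = 1 - 4 * e" unfolding e_def by (simp add: field_simps)
        moreover have "1 - 4 * e < 1 / (1 + 2 * e)" using e by (simp add: field_simps)
          (smt (verit) mult_pos_pos)
        ultimately show ?thesis by simp
      qed
      ultimately show ?case by simp
    qed
  qed
qed


end
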